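(* Let $n\ge1$, $m\ge1$, and let $I_m\subset S_m$ be a nonzero subspace spanned by an initial segment of degree-$m$ monomials with respect to the degree reverse lexicographic order (with $x_0\succ x_1\succ\cdots\succ x_n$). (1) For any $l>0$, $S_lI_m$ is spanned by an initial reverse lexicographic segment of degree-$(m+l)$ monomials if and only if $\dim_kI_m\ge\binom{n+m-1}{m}$, if and only if $x_{n-1}^m\in I_m$. (2) Suppose $x_{n-1}^m\in I_m$. Then for every $l\ge0$, $\dim_kS_m-\dim_kI_m=\dim_kS_{m+l}-\dim_kS_lI_m$. In particular, if $J\subset S$ is a homogeneous ideal generated in degrees $\le m$ with $J_m=I_m$, then the Hilbert polynomial of $S/J$ is constant.
   Context: $S=k[x_0,\dots,x_n]=\bigoplus_m S_m$ over an algebraically closed field $k$ of characteristic zero; $S_lI_m$ denotes the span of products $fg$, $f\in S_l$, $g\in I_m$. The degree reverse lexicographic order with $x_0\succ\cdots\succ x_n$: for monomials of the same degree, $x^\alpha\succ x^\beta$ iff the last nonzero entry of $\alpha-\beta$ is negative. An initial segment of degree $t$ is the set of the first $\ell$ monomials of degree $t$ in this order, for some $\ell$. *)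

theory Defs
  imports Complex_Main "HOL-Library.Poly_Mapping" "HOL-Computational_Algebra.Polynomial"
begin

text \<open>Polynomials in the variables x_0, x_1, ... over a field k: finitely supported
  maps from exponent vectors to coefficients. The ring
  S = k[x_0..x_n] is the subset of those involving only x_0..x_n.\<close>

type_synonym 'a mpoly = "(nat \<Rightarrow>\<^sub>0 nat) \<Rightarrow>\<^sub>0 'a"

definition smult_mp :: "'a::field \<Rightarrow> 'a mpoly \<Rightarrow> 'a mpoly" where
  "smult_mp c p = Poly_Mapping.map (\<lambda>x. c * x) p"

abbreviation kspan :: "'a::field mpoly set \<Rightarrow> 'a mpoly set" where
  "kspan \<equiv> module.span smult_mp"

abbreviation kdim :: "'a::field mpoly set \<Rightarrow> nat" where
  "kdim \<equiv> vector_space.dim smult_mp"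

definition xmon :: "(nat \<Rightarrow>\<^sub>0 nat) \<Rightarrow> 'a::field mpoly" where
  "xmon \<alpha> = Poly_Mapping.single \<alpha> 1"

definition deg_monos :: "nat \<Rightarrow> nat \<Rightarrow> (nat \<Rightarrow>\<^sub>0 nat) set" where
  "deg_monos n t = {\<alpha>. Poly_Mapping.keys \<alpha> \<subseteq> {0..n} \<and> (\<Sum>i\<le>n. Poly_Mapping.lookup \<alpha> i) = t}"

definition ringS :: "nat \<Rightarrow> 'a::field mpoly set" where
  "ringS n = kspan (xmon ` {\<alpha>. Poly_Mapping.keys \<alpha> \<subseteq> {0..n}})"

definition homog :: "nat \<Rightarrow> nat \<Rightarrow> 'a::field mpoly set" where
  "homog n t = kspan (xmon ` deg_monos n t)"

text \<open>Degree reverse lexicographic order on monomials of the same degree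
  (x_0 > x_1 > ... > x_n): alpha > beta iff the last nonzero entry of
  alpha - beta is negative.\<close>
definition revlex_gt :: "nat \<Rightarrow> (nat \<Rightarrow>\<^sub>0 nat) \<Rightarrow> (nat \<Rightarrow>\<^sub>0 nat) \<Rightarrow> bool" where
  "revlex_gt n \<alpha> \<beta> \<longleftrightarrow>
     (\<exists>j\<le>n. Poly_Mapping.lookup \<alpha> j < Poly_Mapping.lookup \<beta> j \<and> (\<forall>i. j < i \<and> i \<le> n \<longrightarrow> Poly_Mapping.lookup \<alpha> i = Poly_Mapping.lookup \<beta> i))"

text \<open>Initial segment of degree t: the first l monomials of degree t, i.e. those
  having fewer than l monomials of degree t above them.\<close>
definition rl_initial_segment :: "nat \<Rightarrow> nat \<Rightarrow> (nat \<Rightarrow>\<^sub>0 nat) set \<Rightarrow> bool" where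
  "rl_initial_segment n t M \<longleftrightarrow>
     (\<exists>l::nat. M = {\<alpha> \<in> deg_monos n t. card {\<beta> \<in> deg_monos n t. revlex_gt n \<beta> \<alpha>} < l})"

definition prodspace :: "'a::field mpoly set \<Rightarrow> 'a mpoly set \<Rightarrow> 'a mpoly set" where
  "prodspace A B = kspan {f * g | f g. f \<in> A \<and> g \<in> B}"

definition is_ideal :: "nat \<Rightarrow> 'a::field mpoly set \<Rightarrow> bool" where
  "is_ideal n J \<longleftrightarrow> J \<subseteq> ringS n \<and> 0 \<in> J \<and> (\<forall>f\<in>J. \<forall>g\<in>J. f + g \<in> J)
      \<and> (\<forall>s\<in>ringS n. \<forall>f\<in>J. s * f \<in> J)"

definition mdeg :: "(nat \<Rightarrow>\<^sub>0 nat) \<Rightarrow> nat" where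
  "mdeg \<alpha> = (\<Sum>i\<in>Poly_Mapping.keys \<alpha>. Poly_Mapping.lookup \<alpha> i)"

definition hcomp :: "nat \<Rightarrow> 'a::field mpoly \<Rightarrow> 'a mpoly" where
  "hcomp t f = (\<Sum>\<alpha>\<in>{\<alpha> \<in> Poly_Mapping.keys f. mdeg \<alpha> = t}. Poly_Mapping.single \<alpha> (Poly_Mapping.lookup f \<alpha>))"

definition homogeneous_ideal :: "nat \<Rightarrow> 'a::field mpoly set \<Rightarrow> bool" where
  "homogeneous_ideal n J \<longleftrightarrow> is_ideal n J \<and> (\<forall>f\<in>J. \<forall>t. hcomp t f \<in> J)"

definition ideal_gen :: "nat \<Rightarrow> 'a::field mpoly set \<Rightarrow> 'a mpoly set" where
  "ideal_gen n G = \<Inter>{K. is_ideal n K \<and> G \<subseteq> K}"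

definition generated_in_degrees_le :: "nat \<Rightarrow> nat \<Rightarrow> 'a::field mpoly set \<Rightarrow> bool" where
  "generated_in_degrees_le n m J \<longleftrightarrow> J = ideal_gen n (\<Union>d\<le>m. J \<inter> homog n d)"

definition hilbert_fn :: "nat \<Rightarrow> 'a::field mpoly set \<Rightarrow> nat \<Rightarrow> int" where
  "hilbert_fn n J t = int (kdim (homog n t :: 'a mpoly set)) - int (kdim (J \<inter> homog n t))"

end

theory Submission
  imports Defs
begin

lemma lookup_smult[simp]: "Poly_Mapping.lookup (smult_mp c p) k = c * Poly_Mapping.lookup p k"
  unfolding smult_mp_def by transfer (simp add: when_def)

lemma smult_eq: "smult_mp c p = Poly_Mapping.single 0 c * p"
  by (simp add: smult_mp_def mult_map_scale_conv_mult)

interpretation VS: vector_space "smult_mp :: 'a::field \<Rightarrow> 'a mpoly \<Rightarrow> 'a mpoly"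
  by unfold_locales (simp_all add: poly_mapping_eq_iff fun_eq_iff algebra_simps lookup_add)

lemma lookup_xmon: "Poly_Mapping.lookup (xmon a :: 'a::field mpoly) b = (if a = b then 1 else 0)"
  by (simp add: xmon_def lookup_single when_def)

lemma xmon_inj: "inj (xmon :: _ \<Rightarrow> 'a::field mpoly)"
proof (rule injI)
  fix a b assume "(xmon a :: 'a mpoly) = xmon b"
  then have "Poly_Mapping.lookup (xmon a :: 'a mpoly) a = Poly_Mapping.lookup (xmon b :: 'a mpoly) a" by simp
  then show "a = b" by (simp add: lookup_xmon split: if_splits)
qed

lemma xmon_sum: "(p :: 'a::field mpoly) = (\<Sum>\<alpha>\<in>Poly_Mapping.keys p. smult_mp (Poly_Mapping.lookup p \<alpha>) (xmon \<alpha>))"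
proof (rule poly_mapping_eqI)
  fix k
  have "Poly_Mapping.lookup (\<Sum>\<alpha>\<in>Poly_Mapping.keys p. smult_mp (Poly_Mapping.lookup p \<alpha>) (xmon \<alpha>)) k
     = (\<Sum>\<alpha>\<in>Poly_Mapping.keys p. (if \<alpha> = k then Poly_Mapping.lookup p \<alpha> else 0))"
    by (simp add: lookup_sum lookup_xmon if_distrib cong: if_cong)
  also have "\<dots> = Poly_Mapping.lookup p k"
    by (simp add: sum.delta in_keys_iff)
  finally show "Poly_Mapping.lookup p k = Poly_Mapping.lookup (\<Sum>\<alpha>\<in>Poly_Mapping.keys p. smult_mp (Poly_Mapping.lookup p \<alpha>) (xmon \<alpha>)) k" by simp
qed

lemma keys_smult: "Poly_Mapping.keys (smult_mp c p) \<subseteq> Poly_Mapping.keys p"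
  by (auto simp: in_keys_iff)

lemma subspace_keys: "VS.subspace {p :: 'a::field mpoly. Poly_Mapping.keys p \<subseteq> X}"
  unfolding VS.subspace_def using keys_add keys_smult by fastforce

lemma span_xmon: "kspan (xmon ` X :: 'a::field mpoly set) = {p. Poly_Mapping.keys p \<subseteq> X}"
proof
  show "kspan (xmon ` X :: 'a mpoly set) \<subseteq> {p. Poly_Mapping.keys p \<subseteq> X}"
    by (rule VS.span_minimal) (auto simp: xmon_def subspace_keys)
  show "{p. Poly_Mapping.keys p \<subseteq> X} \<subseteq> kspan (xmon ` X :: 'a mpoly set)"
  proof
    fix p :: "'a mpoly" assume "p \<in> {p. Poly_Mapping.keys p \<subseteq> X}"
    then have kp: "Poly_Mapping.keys p \<subseteq> X" by simp
    have "(\<Sum>\<alpha>\<in>Poly_Mapping.keys p. smult_mp (Poly_Mapping.lookup p \<alpha>) (xmon \<alpha>)) \<in> kspan (xmon ` X)"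
      using kp by (intro VS.span_sum VS.span_scale VS.span_base) auto
    then show "p \<in> kspan (xmon ` X)" using xmon_sum[of p] by simp
  qed
qed

lemma indep_xmon: "VS.independent (xmon ` X :: 'a::field mpoly set)"
  unfolding VS.independent_explicit_module
proof (intro allI impI)
  fix t u v assume a1: "finite t" and a2: "t \<subseteq> (xmon ` X :: 'a mpoly set)" and a3: "(\<Sum>v\<in>t. smult_mp (u v) v) = 0" and a4: "v \<in> t"
  note a = a1 a2 a3 a4
  then obtain \<alpha> where v: "v = xmon \<alpha>" by auto
  have "0 = Poly_Mapping.lookup (\<Sum>v\<in>t. smult_mp (u v) v) \<alpha>" using a by simp
  also have "\<dots> = (\<Sum>w\<in>t. u w * Poly_Mapping.lookup w \<alpha>)" by (simp add: lookup_sum)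
  also have "\<dots> = (\<Sum>w\<in>t. if w = v then u w else 0)"
  proof (rule sum.cong)
    fix w assume "w \<in> t"
    then obtain \<beta> where w: "w = xmon \<beta>" using a by auto
    show "u w * Poly_Mapping.lookup w \<alpha> = (if w = v then u w else 0)"
      using xmon_inj[where 'a='a] by (auto simp: v w lookup_xmon dest: injD)
  qed simp
  also have "\<dots> = u v" using a by (simp add: sum.delta')
  finally show "u v = 0" by simp
qed

lemma dim_keys: "finite X \<Longrightarrow> kdim {p :: 'a::field mpoly. Poly_Mapping.keys p \<subseteq> X} = card X"
proof -
  have "kdim (kspan (xmon ` X :: 'a mpoly set)) = card (xmon ` X :: 'a mpoly set)"
    by (rule VS.dim_span_eq_card_independent[OF indep_xmon])
  then show ?thesis
    by (simp only: span_xmon card_image[OF inj_on_subset[OF xmon_inj[where 'a='a] subset_UNIV]])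
qed

lemma keys_eq_sets: "{p :: 'a::field mpoly. Poly_Mapping.keys p \<subseteq> A} = {p. Poly_Mapping.keys p \<subseteq> B} \<Longrightarrow> A = B"
proof -
  assume h: "{p :: 'a::field mpoly. Poly_Mapping.keys p \<subseteq> A} = {p. Poly_Mapping.keys p \<subseteq> B}"
  have "\<alpha> \<in> A \<longleftrightarrow> \<alpha> \<in> B" for \<alpha>
  proof -
    have "Poly_Mapping.keys (xmon \<alpha> :: 'a mpoly) = {\<alpha>}" by (simp add: xmon_def)
    then show ?thesis using h by (metis (mono_tags) empty_subsetI insert_subset mem_Collect_eq subset_refl)
  qed
  then show "A = B" by blast
qed

lemma mdeg_sum: "finite S \<Longrightarrow> Poly_Mapping.keys \<alpha> \<subseteq> S \<Longrightarrow> mdeg \<alpha> = (\<Sum>i\<in>S. Poly_Mapping.lookup \<alpha> i)"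
  unfolding mdeg_def by (rule sum.mono_neutral_left) (auto simp: in_keys_iff)

lemma keys_add_nat: "Poly_Mapping.keys (a + b :: nat \<Rightarrow>\<^sub>0 nat) = Poly_Mapping.keys a \<union> Poly_Mapping.keys b"
  by (auto simp: in_keys_iff lookup_add)

lemma mdeg_add: "mdeg (a + b) = mdeg a + mdeg b"
proof -
  let ?S = "Poly_Mapping.keys a \<union> Poly_Mapping.keys b"
  have "mdeg (a + b) = (\<Sum>i\<in>?S. Poly_Mapping.lookup (a+b) i)" by (rule mdeg_sum) (auto simp: keys_add_nat)
  also have "\<dots> = (\<Sum>i\<in>?S. Poly_Mapping.lookup a i) + (\<Sum>i\<in>?S. Poly_Mapping.lookup b i)"
    by (simp add: lookup_add sum.distrib)
  also have "\<dots> = mdeg a + mdeg b" by (simp add: mdeg_sum[symmetric])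
  finally show ?thesis .
qed

lemma mdeg_single[simp]: "mdeg (Poly_Mapping.single i k) = k"
  by (simp add: mdeg_def)

lemma mdeg_zero[simp]: "mdeg 0 = 0"
  by (simp add: mdeg_def)

lemma mdeg_eq0: "mdeg a = 0 \<Longrightarrow> a = 0"
  by (auto simp: mdeg_def in_keys_iff intro!: poly_mapping_eqI)

lemma deg_monos_iff: "\<alpha> \<in> deg_monos n t \<longleftrightarrow> Poly_Mapping.keys \<alpha> \<subseteq> {0..n} \<and> mdeg \<alpha> = t"
proof -
  have "Poly_Mapping.keys \<alpha> \<subseteq> {0..n} \<Longrightarrow> mdeg \<alpha> = (\<Sum>i\<le>n. Poly_Mapping.lookup \<alpha> i)"
    by (rule mdeg_sum) (auto simp: atLeast0AtMost)
  then show ?thesis unfolding deg_monos_def by auto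
qed

lemma split_mono: "k \<le> mdeg \<mu> \<Longrightarrow> \<exists>\<mu>2 \<rho>. \<mu> = \<mu>2 + \<rho> \<and> mdeg \<mu>2 = k"
proof (induction k)
  case 0
  show ?case by (rule exI[of _ 0], rule exI[of _ \<mu>]) simp
next
  case (Suc k)
  then obtain \<mu>2 \<rho> where h: "\<mu> = \<mu>2 + \<rho>" "mdeg \<mu>2 = k" by auto
  then have "mdeg \<rho> > 0" using Suc.prems mdeg_add[of \<mu>2 \<rho>] by simp
  then have "\<rho> \<noteq> 0" by (auto)
  then obtain i where i: "i \<in> Poly_Mapping.keys \<rho>" by (metis all_not_in_conv keys_eq_empty)
  define \<rho>' where "\<rho>' = \<rho> - Poly_Mapping.single i 1"
  have r: "\<rho> = Poly_Mapping.single i 1 + \<rho>'"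
    using i by (intro poly_mapping_eqI) (auto simp: \<rho>'_def lookup_add lookup_minus lookup_single when_def in_keys_iff)
  show ?case
    by (rule exI[of _ "\<mu>2 + Poly_Mapping.single i 1"], rule exI[of _ \<rho>'])
       (simp add: h r mdeg_add add.assoc)
qed

lemma keys_le_add: "Poly_Mapping.keys a \<subseteq> Poly_Mapping.keys (a + b :: nat \<Rightarrow>\<^sub>0 nat)"
  by (simp add: keys_add_nat)

lemma pm_cancel: assumes "(x::nat\<Rightarrow>\<^sub>0nat) + c = y + c" shows "x = y"
proof (rule poly_mapping_eqI)
  fix k have "Poly_Mapping.lookup (x+c) k = Poly_Mapping.lookup (y+c) k" using assms by simp
  then show "Poly_Mapping.lookup x k = Poly_Mapping.lookup y k" by (simp add: lookup_add)
qed

lemma deg_monos_0: "deg_monos 0 t = {Poly_Mapping.single 0 t}"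
proof -
  have "\<alpha> \<in> deg_monos 0 t \<longleftrightarrow> \<alpha> = Poly_Mapping.single 0 t" for \<alpha>
  proof
    assume "\<alpha> \<in> deg_monos 0 t"
    then have k: "Poly_Mapping.keys \<alpha> \<subseteq> {0}" and s: "Poly_Mapping.lookup \<alpha> 0 = t"
      unfolding deg_monos_def by auto
    show "\<alpha> = Poly_Mapping.single 0 t"
      using k s by (intro poly_mapping_eqI) (auto simp: lookup_single when_def in_keys_iff)
  qed (auto simp: deg_monos_def)
  then show ?thesis by blast
qed

lemma deg_monos_Suc: "deg_monos (Suc k) t =
   (\<Union>e\<in>{..t}. (\<lambda>\<beta>. \<beta> + Poly_Mapping.single (Suc k) e) ` deg_monos k (t - e))"
proof (intro set_eqI iffI)
  fix \<alpha> assume "\<alpha> \<in> deg_monos (Suc k) t"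
  then have a: "Poly_Mapping.keys \<alpha> \<subseteq> {0..Suc k}" "mdeg \<alpha> = t" by (auto simp: deg_monos_iff)
  define e where "e = Poly_Mapping.lookup \<alpha> (Suc k)"
  define \<beta> where "\<beta> = \<alpha> - Poly_Mapping.single (Suc k) e"
  have ab: "\<alpha> = \<beta> + Poly_Mapping.single (Suc k) e"
    by (intro poly_mapping_eqI) (auto simp: \<beta>_def e_def lookup_add lookup_minus lookup_single when_def)
  have kb: "Poly_Mapping.keys \<beta> \<subseteq> {0..k}"
  proof
    fix i assume i: "i \<in> Poly_Mapping.keys \<beta>"
    then have "i \<noteq> Suc k" by (auto simp: \<beta>_def e_def in_keys_iff lookup_minus)
    moreover have "i \<in> Poly_Mapping.keys \<alpha>" using i by (auto simp: \<beta>_def in_keys_iff lookup_minus lookup_single when_def split: if_splits)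
    ultimately show "i \<in> {0..k}" using a(1) by (auto simp: le_Suc_eq)
  qed
  have "mdeg \<alpha> = mdeg \<beta> + e" using ab mdeg_add by (metis mdeg_single)
  then have et: "e \<le> t" "mdeg \<beta> = t - e" using a by auto
  show "\<alpha> \<in> (\<Union>e\<in>{..t}. (\<lambda>\<beta>. \<beta> + Poly_Mapping.single (Suc k) e) ` deg_monos k (t - e))"
  proof (rule UN_I[of e])
    show "\<alpha> \<in> (\<lambda>\<beta>. \<beta> + Poly_Mapping.single (Suc k) e) ` deg_monos k (t - e)"
      using ab kb et by (intro image_eqI[of _ _ \<beta>]) (auto simp: deg_monos_iff)
  qed (use et in simp)
next
  fix \<alpha> assume "\<alpha> \<in> (\<Union>e\<in>{..t}. (\<lambda>\<beta>. \<beta> + Poly_Mapping.single (Suc k) e) ` deg_monos k (t - e))"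
  then obtain e \<beta> where "e \<le> t" "\<beta> \<in> deg_monos k (t - e)" "\<alpha> = \<beta> + Poly_Mapping.single (Suc k) e" by auto
  then show "\<alpha> \<in> deg_monos (Suc k) t"
    by (auto simp: deg_monos_iff mdeg_add keys_add_nat split: if_splits)
qed

lemma card_deg_monos: "finite (deg_monos k t) \<and> card (deg_monos k t) = (k + t) choose t"
proof (induction k arbitrary: t)
  case 0
  show ?case by (simp add: deg_monos_0)
next
  case (Suc k)
  let ?f = "\<lambda>e \<beta>. \<beta> + Poly_Mapping.single (Suc k) e"
  have inj: "inj_on (?f e) A" for e :: nat and A by (rule inj_onI) (erule pm_cancel)
  have disj: "?f e ` deg_monos k (t - e) \<inter> ?f e' ` deg_monos k (t - e') = {}" if "e \<noteq> e'" for e e' :: nat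
  proof -
    have *: "Poly_Mapping.lookup (?f e \<beta>) (Suc k) = e" if "\<beta> \<in> deg_monos k s" for e :: nat and \<beta> s
    proof -
      have "Poly_Mapping.lookup \<beta> (Suc k) = 0" using that by (auto simp: deg_monos_iff in_keys_iff)
      then show ?thesis by (simp add: lookup_add)
    qed
    show ?thesis
    proof (rule ccontr)
      assume "?f e ` deg_monos k (t - e) \<inter> ?f e' ` deg_monos k (t - e') \<noteq> {}"
      then obtain b1 b2 where b: "b1 \<in> deg_monos k (t - e)" "b2 \<in> deg_monos k (t - e')" "?f e b1 = ?f e' b2" by blast
      have "Poly_Mapping.lookup (?f e b1) (Suc k) = e" "Poly_Mapping.lookup (?f e' b2) (Suc k) = e'"
        using *[OF b(1)] *[OF b(2)] by auto
      then show False using b(3) that by simp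
    qed
  qed
  have fin: "finite (deg_monos (Suc k) t)" unfolding deg_monos_Suc using Suc.IH by auto
  have "card (deg_monos (Suc k) t) = (\<Sum>e\<le>t. card (?f e ` deg_monos k (t - e)))"
    unfolding deg_monos_Suc by (rule card_UN_disjoint) (use Suc.IH disj in auto)
  also have "\<dots> = (\<Sum>e\<le>t. (k + (t - e)) choose (t - e))"
    using Suc.IH by (simp add: card_image[OF inj])
  also have "\<dots> = (\<Sum>j\<le>t. (k + j) choose j)"
    using sum.atLeastAtMost_rev [of "\<lambda>e. (k + (t - e)) choose (t - e)" 0 t]
    by (simp add: atMost_atLeast0)
  also have "\<dots> = (Suc k + t) choose t" by (simp add: sum_choose_lower)
  finally show ?case using fin by simp
qed

lemma finite_deg_monos: "finite (deg_monos k t)"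
  using card_deg_monos by blast

lemma rl_irrefl: "\<not> revlex_gt n a a"
  by (simp add: revlex_gt_def)

lemma rl_asym: "revlex_gt n a b \<Longrightarrow> \<not> revlex_gt n b a"
  unfolding revlex_gt_def by (metis less_asym linorder_neqE_nat)

lemma rl_trans: "revlex_gt n a b \<Longrightarrow> revlex_gt n b c \<Longrightarrow> revlex_gt n a c"
proof -
  assume "revlex_gt n a b" "revlex_gt n b c"
  then obtain j1 j2 where 1: "j1 \<le> n" "Poly_Mapping.lookup a j1 < Poly_Mapping.lookup b j1"
    "\<forall>i. j1 < i \<and> i \<le> n \<longrightarrow> Poly_Mapping.lookup a i = Poly_Mapping.lookup b i"
    and 2: "j2 \<le> n" "Poly_Mapping.lookup b j2 < Poly_Mapping.lookup c j2"
    "\<forall>i. j2 < i \<and> i \<le> n \<longrightarrow> Poly_Mapping.lookup b i = Poly_Mapping.lookup c i"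
    unfolding revlex_gt_def by blast
  show ?thesis unfolding revlex_gt_def
  proof (cases j1 j2 rule: linorder_cases)
    case less
    then show "\<exists>j\<le>n. Poly_Mapping.lookup a j < Poly_Mapping.lookup c j \<and> (\<forall>i. j < i \<and> i \<le> n \<longrightarrow> Poly_Mapping.lookup a i = Poly_Mapping.lookup c i)"
      using 1 2 by (intro exI[of _ j2]) auto
  next
    case equal
    then show "\<exists>j\<le>n. Poly_Mapping.lookup a j < Poly_Mapping.lookup c j \<and> (\<forall>i. j < i \<and> i \<le> n \<longrightarrow> Poly_Mapping.lookup a i = Poly_Mapping.lookup c i)"
      using 1 2 by (intro exI[of _ j2]) auto
  next
    case greater
    then show "\<exists>j\<le>n. Poly_Mapping.lookup a j < Poly_Mapping.lookup c j \<and> (\<forall>i. j < i \<and> i \<le> n \<longrightarrow> Poly_Mapping.lookup a i = Poly_Mapping.lookup c i)"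
      using 1 2 by (intro exI[of _ j1]) auto
  qed
qed

lemma rl_total: "Poly_Mapping.keys a \<subseteq> {0..n} \<Longrightarrow> Poly_Mapping.keys b \<subseteq> {0..n} \<Longrightarrow> a \<noteq> b
   \<Longrightarrow> revlex_gt n a b \<or> revlex_gt n b a"
proof -
  assume ka: "Poly_Mapping.keys a \<subseteq> {0..n}" and kb: "Poly_Mapping.keys b \<subseteq> {0..n}" and ne: "a \<noteq> b"
  let ?S = "{j. j \<le> n \<and> Poly_Mapping.lookup a j \<noteq> Poly_Mapping.lookup b j}"
  have "?S \<noteq> {}"
  proof
    assume "?S = {}"
    have "Poly_Mapping.lookup a j = Poly_Mapping.lookup b j" for j
    proof (cases "j \<le> n")
      case True then show ?thesis using \<open>?S = {}\<close> by blast
    next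
      case False
      then have "j \<notin> Poly_Mapping.keys a" "j \<notin> Poly_Mapping.keys b" using ka kb by auto
      then show ?thesis by (simp add: not_in_keys_iff_lookup_eq_zero)
    qed
    then show False using ne by (simp add: poly_mapping_eqI)
  qed
  have fS: "finite ?S" by (rule finite_subset[of _ "{..n}"]) auto
  let ?j = "Max ?S"
  have m1: "?j \<in> ?S" using fS \<open>?S \<noteq> {}\<close> by (rule Max_in)
  have m2: "j \<le> ?j" if "j \<in> ?S" for j using fS that by (rule Max_ge)
  have eq: "Poly_Mapping.lookup a i = Poly_Mapping.lookup b i" if "?j < i" "i \<le> n" for i
  proof (rule ccontr)
    assume "Poly_Mapping.lookup a i \<noteq> Poly_Mapping.lookup b i"
    then have "i \<in> ?S" using that by simp
    then have "i \<le> ?j" by (rule m2)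
    then show False using that by simp
  qed
  have jn: "?j \<le> n" using m1 by simp
  show ?thesis
  proof (cases "Poly_Mapping.lookup a ?j < Poly_Mapping.lookup b ?j")
    case True
    have "revlex_gt n a b" unfolding revlex_gt_def
    proof (intro exI[of _ ?j] conjI allI impI)
      fix i assume "?j < i \<and> i \<le> n" then show "Poly_Mapping.lookup a i = Poly_Mapping.lookup b i" using eq by blast
    qed (use True jn in auto)
    then show ?thesis by blast
  next
    case False
    then have lt: "Poly_Mapping.lookup b ?j < Poly_Mapping.lookup a ?j" using m1 by auto
    have "revlex_gt n b a" unfolding revlex_gt_def
    proof (intro exI[of _ ?j] conjI allI impI)
      fix i assume "?j < i \<and> i \<le> n" then show "Poly_Mapping.lookup b i = Poly_Mapping.lookup a i" using eq by (metis)
    qed (use lt jn in auto)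
    then show ?thesis by blast
  qed
qed

lemma rl_add: "revlex_gt n (a + c) (b + c) \<longleftrightarrow> revlex_gt n a b"
  by (simp add: revlex_gt_def lookup_add)

definition downclosed :: "nat \<Rightarrow> nat \<Rightarrow> (nat \<Rightarrow>\<^sub>0 nat) set \<Rightarrow> bool" where
  "downclosed n t M \<longleftrightarrow> M \<subseteq> deg_monos n t \<and> (\<forall>\<alpha>\<in>M. \<forall>\<beta>\<in>deg_monos n t. revlex_gt n \<beta> \<alpha> \<longrightarrow> \<beta> \<in> M)"

lemma seg_iff: "rl_initial_segment n t M \<longleftrightarrow> downclosed n t M"
proof
  assume "rl_initial_segment n t M"
  then obtain l where M: "M = {\<alpha> \<in> deg_monos n t. card {\<beta> \<in> deg_monos n t. revlex_gt n \<beta> \<alpha>} < l}"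
    unfolding rl_initial_segment_def by blast
  have "card {\<gamma> \<in> deg_monos n t. revlex_gt n \<gamma> \<beta>} < card {\<gamma> \<in> deg_monos n t. revlex_gt n \<gamma> \<alpha>}"
    if "\<beta> \<in> deg_monos n t" "revlex_gt n \<beta> \<alpha>" for \<alpha> \<beta>
  proof (rule psubset_card_mono)
    show "finite {\<gamma> \<in> deg_monos n t. revlex_gt n \<gamma> \<alpha>}" using finite_deg_monos by simp
    show "{\<gamma> \<in> deg_monos n t. revlex_gt n \<gamma> \<beta>} \<subset> {\<gamma> \<in> deg_monos n t. revlex_gt n \<gamma> \<alpha>}"
      using that rl_trans[of n _ \<beta> \<alpha>] rl_irrefl[of n \<beta>] by blast
  qed
  then show "downclosed n t M" unfolding downclosed_def M by (auto dest: less_trans)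
next
  assume d: "downclosed n t M"
  have fin: "finite M" using d finite_deg_monos unfolding downclosed_def by (metis finite_subset)
  have "M = {\<alpha> \<in> deg_monos n t. card {\<beta> \<in> deg_monos n t. revlex_gt n \<beta> \<alpha>} < card M}"
  proof (intro set_eqI iffI)
    fix \<alpha> assume a: "\<alpha> \<in> M"
    have "{\<beta> \<in> deg_monos n t. revlex_gt n \<beta> \<alpha>} \<subset> M"
      using d a rl_irrefl unfolding downclosed_def by blast
    then show "\<alpha> \<in> {\<alpha> \<in> deg_monos n t. card {\<beta> \<in> deg_monos n t. revlex_gt n \<beta> \<alpha>} < card M}"
      using a d fin psubset_card_mono unfolding downclosed_def by blast
  next
    fix \<alpha> assume a: "\<alpha> \<in> {\<alpha> \<in> deg_monos n t. card {\<beta> \<in> deg_monos n t. revlex_gt n \<beta> \<alpha>} < card M}"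
    show "\<alpha> \<in> M"
    proof (rule ccontr)
      assume na: "\<alpha> \<notin> M"
      have "M \<subseteq> {\<beta> \<in> deg_monos n t. revlex_gt n \<beta> \<alpha>}"
      proof
        fix \<beta> assume b: "\<beta> \<in> M"
        then have bd: "\<beta> \<in> deg_monos n t" using d unfolding downclosed_def by blast
        have "\<beta> \<noteq> \<alpha>" using b na by blast
        then have "revlex_gt n \<beta> \<alpha> \<or> revlex_gt n \<alpha> \<beta>"
          using bd a by (intro rl_total) (auto simp: deg_monos_iff)
        moreover have "\<not> revlex_gt n \<alpha> \<beta>" using d b a na unfolding downclosed_def by blast
        ultimately show "\<beta> \<in> {\<beta> \<in> deg_monos n t. revlex_gt n \<beta> \<alpha>}" using bd by blast
      qed
      then have "card M \<le> card {\<beta> \<in> deg_monos n t. revlex_gt n \<beta> \<alpha>}"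
        by (rule card_mono[rotated]) (simp add: finite_deg_monos)
      then show False using a by simp
    qed
  qed
  then show "rl_initial_segment n t M" unfolding rl_initial_segment_def by blast
qed

lemma lookup_le_mdeg: "Poly_Mapping.lookup \<alpha> i \<le> mdeg \<alpha>"
proof (cases "i \<in> Poly_Mapping.keys \<alpha>")
  case True
  then show ?thesis unfolding mdeg_def by (intro member_le_sum) auto
qed (simp add: in_keys_iff)

lemma mdeg_eq_lookup: "Poly_Mapping.lookup \<alpha> i = mdeg \<alpha> \<Longrightarrow> \<alpha> = Poly_Mapping.single i (mdeg \<alpha>)"
proof -
  assume h: "Poly_Mapping.lookup \<alpha> i = mdeg \<alpha>"
  define v where "v = Poly_Mapping.lookup \<alpha> i"
  define r where "r = \<alpha> - Poly_Mapping.single i v"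
  have ar: "\<alpha> = Poly_Mapping.single i v + r"
    by (intro poly_mapping_eqI) (auto simp: r_def v_def lookup_add lookup_minus lookup_single when_def)
  have "mdeg \<alpha> = v + mdeg r" unfolding ar by (simp add: mdeg_add)
  then have "r = 0" using h mdeg_eq0 by (simp add: v_def)
  then show ?thesis using ar h by (simp add: v_def)
qed

lemma keys_sub_single: "Poly_Mapping.keys \<alpha> \<subseteq> {i} \<Longrightarrow> \<alpha> = Poly_Mapping.single i (mdeg \<alpha>)"
proof -
  assume "Poly_Mapping.keys \<alpha> \<subseteq> {i}"
  then have "mdeg \<alpha> = (\<Sum>j\<in>{i}. Poly_Mapping.lookup \<alpha> j)" by (intro mdeg_sum) auto
  then show ?thesis by (intro mdeg_eq_lookup) simp
qed

lemma keys_add_sub: "Poly_Mapping.keys (a + b :: nat \<Rightarrow>\<^sub>0 nat) \<subseteq> S \<longleftrightarrow> Poly_Mapping.keys a \<subseteq> S \<and> Poly_Mapping.keys b \<subseteq> S"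
  by (auto simp: keys_add_nat)

lemma split_at: fixes \<beta> :: "nat \<Rightarrow>\<^sub>0 nat" assumes "Poly_Mapping.lookup \<beta> i \<ge> k" shows "\<beta> = (\<beta> - Poly_Mapping.single i k) + Poly_Mapping.single i k"
proof (rule poly_mapping_eqI)
  fix j show "Poly_Mapping.lookup \<beta> j = Poly_Mapping.lookup (\<beta> - Poly_Mapping.single i k + Poly_Mapping.single i k) j"
    using assms by (cases "i = j") (simp_all add: lookup_add lookup_minus lookup_single)
qed

lemma keys_minus_sub: "Poly_Mapping.keys (\<beta> - Poly_Mapping.single i k) \<subseteq> Poly_Mapping.keys (\<beta> :: nat \<Rightarrow>\<^sub>0 nat)"
  by (auto simp: in_keys_iff lookup_minus)

locale segsetup =
  fixes n m :: nat and M :: "(nat \<Rightarrow>\<^sub>0 nat) set"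
  assumes n1: "n \<ge> 1" and dc: "downclosed n m M" and ne: "M \<noteq> {}"
begin

definition P :: "nat \<Rightarrow> (nat \<Rightarrow>\<^sub>0 nat) set" where
  "P l = {\<delta> + \<alpha> | \<delta> \<alpha>. \<delta> \<in> deg_monos n l \<and> \<alpha> \<in> M}"

abbreviation e where "e \<equiv> Poly_Mapping.single (n - 1) m"

lemma MD: "M \<subseteq> deg_monos n m" using dc unfolding downclosed_def by blast

lemma finM: "finite M" using MD finite_deg_monos finite_subset by blast

lemma P_sub: "P l \<subseteq> deg_monos n (m + l)"
  using MD by (auto simp: P_def deg_monos_iff keys_add_sub mdeg_add)

lemma finP: "finite (P l)" using P_sub finite_deg_monos finite_subset by blast

lemma e_D: "e \<in> deg_monos n m" by (auto simp: deg_monos_iff)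

lemma F_sub: assumes "e \<in> M" "\<alpha> \<in> deg_monos n m" "Poly_Mapping.lookup \<alpha> n = 0" shows "\<alpha> \<in> M"
proof (cases "\<alpha> = e")
  case True then show ?thesis using assms by simp
next
  case False
  have md: "mdeg \<alpha> = m" using assms by (simp add: deg_monos_iff)
  have "Poly_Mapping.lookup \<alpha> (n-1) \<noteq> m"
    using mdeg_eq_lookup[of \<alpha> "n-1"] md False by auto
  then have lt: "Poly_Mapping.lookup \<alpha> (n-1) < m" using lookup_le_mdeg[of \<alpha> "n-1"] md by simp
  have "revlex_gt n \<alpha> e" unfolding revlex_gt_def
  proof (intro exI[of _ "n-1"] conjI allI impI)
    fix i assume "n - 1 < i \<and> i \<le> n"
    then have "i = n" by auto
    then show "Poly_Mapping.lookup \<alpha> i = Poly_Mapping.lookup e i" using assms n1 by (simp add: lookup_single when_def)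
  qed (use lt in auto)
  then show ?thesis using dc assms unfolding downclosed_def by blast
qed

lemma Lle: assumes "\<delta> \<in> deg_monos n l"
  shows "\<delta> = Poly_Mapping.single n l \<or> revlex_gt n \<delta> (Poly_Mapping.single n l)"
proof (cases "Poly_Mapping.lookup \<delta> n = l")
  case True
  then show ?thesis using mdeg_eq_lookup[of \<delta> n] assms by (simp add: deg_monos_iff)
next
  case False
  then have "Poly_Mapping.lookup \<delta> n < l" using lookup_le_mdeg[of \<delta> n] assms by (simp add: deg_monos_iff)
  then have "revlex_gt n \<delta> (Poly_Mapping.single n l)" unfolding revlex_gt_def
    by (intro exI[of _ n]) auto
  then show ?thesis by blast
qed

lemma L1: assumes "e \<in> M" "\<beta> \<in> deg_monos n (m + l)" "Poly_Mapping.lookup \<beta> n \<le> l"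
  shows "\<beta> \<in> P l"
proof -
  define b0 where "b0 = Poly_Mapping.lookup \<beta> n"
  define \<beta>0 where "\<beta>0 = \<beta> - Poly_Mapping.single n b0"
  have b: "\<beta> = \<beta>0 + Poly_Mapping.single n b0" unfolding \<beta>0_def by (rule split_at) (simp add: b0_def)
  have kb: "Poly_Mapping.keys \<beta> \<subseteq> {0..n}" "mdeg \<beta> = m + l" using assms by (auto simp: deg_monos_iff)
  have "mdeg \<beta> = mdeg \<beta>0 + b0" using b by (simp add: mdeg_add)
  then have "m \<le> mdeg \<beta>0" using kb assms by (simp add: b0_def)
  then obtain \<alpha>' \<rho> where s: "\<beta>0 = \<alpha>' + \<rho>" "mdeg \<alpha>' = m" using split_mono by blast
  have k0: "Poly_Mapping.keys \<beta>0 \<subseteq> {0..n}" using kb keys_minus_sub unfolding \<beta>0_def by blast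
  have "Poly_Mapping.lookup \<beta>0 n = 0" by (simp add: \<beta>0_def lookup_minus b0_def)
  then have a0: "Poly_Mapping.lookup \<alpha>' n = 0" using s by (simp add: lookup_add)
  have "\<alpha>' \<in> deg_monos n m" using s k0 by (auto simp: deg_monos_iff keys_add_sub)
  then have aM: "\<alpha>' \<in> M" using F_sub assms a0 by blast
  have dl: "\<rho> + Poly_Mapping.single n b0 \<in> deg_monos n l"
  proof -
    have "mdeg \<beta> = m + mdeg \<rho> + b0" using b s by (simp add: mdeg_add)
    then show ?thesis using k0 s kb by (auto simp: deg_monos_iff keys_add_sub mdeg_add)
  qed
  have eq: "\<beta> = (\<rho> + Poly_Mapping.single n b0) + \<alpha>'" using b s by (simp add: ac_simps)
  show ?thesis unfolding P_def
    by (rule CollectI, rule exI[of _ "\<rho> + Poly_Mapping.single n b0"], rule exI[of _ \<alpha>']) (use dl eq aM in simp)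
qed

lemma L2: assumes "\<alpha> \<in> M" "\<delta> \<in> deg_monos n l" "\<gamma> \<in> deg_monos n m"
  "\<gamma> + Poly_Mapping.single n l = \<delta> + \<alpha>"
  shows "\<gamma> \<in> M"
  using Lle[OF assms(2)]
proof
  assume "\<delta> = Poly_Mapping.single n l"
  then have "\<gamma> = \<alpha>" using assms(4) by (simp add: add.commute)
  then show ?thesis using assms by simp
next
  assume "revlex_gt n \<delta> (Poly_Mapping.single n l)"
  then have "revlex_gt n (\<delta> + \<alpha>) (Poly_Mapping.single n l + \<alpha>)" by (simp add: rl_add)
  then have "revlex_gt n (\<gamma> + Poly_Mapping.single n l) (\<alpha> + Poly_Mapping.single n l)"
    using assms(4) by (simp add: add.commute)
  then have "revlex_gt n \<gamma> \<alpha>" by (simp add: rl_add)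
  then show ?thesis using dc assms unfolding downclosed_def by blast
qed

lemma part_i: assumes "e \<in> M" shows "downclosed n (m + l) (P l)"
  unfolding downclosed_def
proof (intro conjI ballI impI)
  show "P l \<subseteq> deg_monos n (m + l)" by (rule P_sub)
  fix \<gamma> \<beta> assume g: "\<gamma> \<in> P l" and b: "\<beta> \<in> deg_monos n (m + l)" and gt: "revlex_gt n \<beta> \<gamma>"
  show "\<beta> \<in> P l"
  proof (cases "Poly_Mapping.lookup \<beta> n \<le> l")
    case True then show ?thesis using L1 assms b by blast
  next
    case False
    obtain \<delta> \<alpha> where g': "\<gamma> = \<delta> + \<alpha>" "\<delta> \<in> deg_monos n l" "\<alpha> \<in> M" using g unfolding P_def by blast
    have gD: "\<gamma> \<in> deg_monos n (m + l)" using g P_sub by blast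
    have "\<not> Poly_Mapping.lookup \<gamma> n < Poly_Mapping.lookup \<beta> n"
    proof
      assume "Poly_Mapping.lookup \<gamma> n < Poly_Mapping.lookup \<beta> n"
      then have "revlex_gt n \<gamma> \<beta>" unfolding revlex_gt_def by (intro exI[of _ n]) auto
      then show False using gt rl_asym by blast
    qed
    then have gl: "Poly_Mapping.lookup \<gamma> n \<ge> l" using False by simp
    define \<beta>' where "\<beta>' = \<beta> - Poly_Mapping.single n l"
    define \<gamma>' where "\<gamma>' = \<gamma> - Poly_Mapping.single n l"
    have bb: "\<beta> = \<beta>' + Poly_Mapping.single n l" unfolding \<beta>'_def by (rule split_at) (use False in simp)
    have gg: "\<gamma> = \<gamma>' + Poly_Mapping.single n l" unfolding \<gamma>'_def by (rule split_at) (use gl in simp)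
    have b'D: "\<beta>' \<in> deg_monos n m"
      using b bb by (auto simp: deg_monos_iff keys_add_sub mdeg_add)
    have g'D: "\<gamma>' \<in> deg_monos n m"
      using gD gg by (auto simp: deg_monos_iff keys_add_sub mdeg_add)
    have "\<gamma>' \<in> M" by (rule L2[OF g'(3) g'(2) g'D]) (use gg g'(1) in simp)
    moreover have "revlex_gt n \<beta>' \<gamma>'"
    proof -
      have "revlex_gt n (\<beta>' + Poly_Mapping.single n l) (\<gamma>' + Poly_Mapping.single n l)" using gt bb gg by simp
      then show ?thesis by (simp only: rl_add)
    qed
    ultimately have bM: "\<beta>' \<in> M" using dc b'D unfolding downclosed_def by blast
    have sD: "Poly_Mapping.single n l \<in> deg_monos n l" by (auto simp: deg_monos_iff)
    have eq: "\<beta> = Poly_Mapping.single n l + \<beta>'" using bb by (simp add: add.commute)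
    show ?thesis unfolding P_def
      by (rule CollectI, rule exI[of _ "Poly_Mapping.single n l"], rule exI[of _ \<beta>']) (use bM sD eq in simp)
  qed
qed

end

context segsetup begin

lemma part_ii: assumes "l > 0" "downclosed n (m + l) (P l)" shows "e \<in> M"
proof (rule ccontr)
  assume ne': "e \<notin> M"
  obtain \<alpha> where a: "\<alpha> \<in> M" using ne by blast
  have sD: "Poly_Mapping.single n l \<in> deg_monos n l" by (auto simp: deg_monos_iff)
  let ?\<gamma> = "Poly_Mapping.single n l + \<alpha>"
  have gP: "?\<gamma> \<in> P l" unfolding P_def
    by (rule CollectI, rule exI[of _ "Poly_Mapping.single n l"], rule exI[of _ \<alpha>]) (use a sD in simp)
  let ?\<beta> = "Poly_Mapping.single (n-1) (m + l) :: nat \<Rightarrow>\<^sub>0 nat"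
  have bD: "?\<beta> \<in> deg_monos n (m + l)" by (auto simp: deg_monos_iff)
  have "revlex_gt n ?\<beta> ?\<gamma>" unfolding revlex_gt_def
    using n1 assms(1) by (intro exI[of _ n]) (auto simp: lookup_add lookup_single when_def)
  then have "?\<beta> \<in> P l" using assms(2) gP bD unfolding downclosed_def by blast
  then obtain \<delta> \<alpha>' where d: "?\<beta> = \<delta> + \<alpha>'" "\<alpha>' \<in> M" unfolding P_def by blast
  have "Poly_Mapping.keys \<alpha>' \<subseteq> {n-1}"
  proof -
    have "Poly_Mapping.keys \<alpha>' \<subseteq> Poly_Mapping.keys ?\<beta>" using d(1) by (simp add: keys_add_nat)
    then show ?thesis by (auto split: if_splits)
  qed
  then have "\<alpha>' = Poly_Mapping.single (n-1) (mdeg \<alpha>')" by (rule keys_sub_single)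
  moreover have "mdeg \<alpha>' = m" using d(2) MD by (auto simp: deg_monos_iff)
  ultimately show False using d(2) ne' by simp
qed

lemma part_iii: assumes "e \<in> M"
  shows "int (card (deg_monos n m)) - int (card M) = int (card (deg_monos n (m + l))) - int (card (P l))"
proof -
  let ?f = "\<lambda>\<alpha>. \<alpha> + Poly_Mapping.single n l"
  have "bij_betw ?f (deg_monos n m - M) (deg_monos n (m + l) - P l)"
    unfolding bij_betw_def
  proof (intro conjI)
    show "inj_on ?f (deg_monos n m - M)" by (rule inj_onI) (erule pm_cancel)
    show "?f ` (deg_monos n m - M) = deg_monos n (m + l) - P l"
    proof (intro set_eqI iffI)
      fix \<beta> assume "\<beta> \<in> ?f ` (deg_monos n m - M)"
      then obtain \<alpha> where a: "\<alpha> \<in> deg_monos n m" "\<alpha> \<notin> M" "\<beta> = ?f \<alpha>" by blast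
      have "\<beta> \<notin> P l"
      proof
        assume "\<beta> \<in> P l"
        then obtain \<delta> \<alpha>' where da: "\<beta> = \<delta> + \<alpha>'" "\<delta> \<in> deg_monos n l" "\<alpha>' \<in> M" unfolding P_def by blast
        have "\<alpha> \<in> M" by (rule L2[OF da(3) da(2) a(1)]) (use da(1) a(3) in simp)
        then show False using a by blast
      qed
      moreover have "\<beta> \<in> deg_monos n (m + l)" using a by (auto simp: deg_monos_iff keys_add_sub mdeg_add)
      ultimately show "\<beta> \<in> deg_monos n (m + l) - P l" by blast
    next
      fix \<beta> assume b: "\<beta> \<in> deg_monos n (m + l) - P l"
      then have "\<not> Poly_Mapping.lookup \<beta> n \<le> l" using L1 assms by blast
      define \<beta>' where "\<beta>' = \<beta> - Poly_Mapping.single n l"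
      have bb: "\<beta> = \<beta>' + Poly_Mapping.single n l" unfolding \<beta>'_def
        by (rule split_at) (use \<open>\<not> Poly_Mapping.lookup \<beta> n \<le> l\<close> in simp)
      have b'D: "\<beta>' \<in> deg_monos n m"
        using b bb by (auto simp: deg_monos_iff keys_add_sub mdeg_add)
      have "\<beta>' \<notin> M"
      proof
        assume "\<beta>' \<in> M"
        have sD: "Poly_Mapping.single n l \<in> deg_monos n l" by (auto simp: deg_monos_iff)
        have eq: "\<beta> = Poly_Mapping.single n l + \<beta>'" using bb by (simp add: add.commute)
        have "\<beta> \<in> P l" unfolding P_def
          by (rule CollectI, rule exI[of _ "Poly_Mapping.single n l"], rule exI[of _ \<beta>']) (use \<open>\<beta>' \<in> M\<close> sD eq in simp)
        then show False using b by blast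
      qed
      then show "\<beta> \<in> ?f ` (deg_monos n m - M)" by (intro image_eqI[of _ _ \<beta>']) (use bb b'D in auto)
    qed
  qed
  then have "card (deg_monos n m - M) = card (deg_monos n (m + l) - P l)" by (rule bij_betw_same_card)
  moreover have "card (deg_monos n m - M) = card (deg_monos n m) - card M"
    using MD finM by (simp add: card_Diff_subset)
  moreover have "card (deg_monos n (m + l) - P l) = card (deg_monos n (m + l)) - card (P l)"
    using P_sub finP by (simp add: card_Diff_subset)
  moreover have "card M \<le> card (deg_monos n m)" using MD by (simp add: card_mono finite_deg_monos)
  moreover have "card (P l) \<le> card (deg_monos n (m + l))" using P_sub by (simp add: card_mono finite_deg_monos)
  ultimately show ?thesis by linarith
qed

lemma part_iv: "(n + m - 1) choose m \<le> card M \<longleftrightarrow> e \<in> M"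
proof -
  let ?F = "{\<alpha> \<in> deg_monos n m. Poly_Mapping.lookup \<alpha> n = 0}"
  have F: "?F = deg_monos (n - 1) m"
  proof (intro set_eqI iffI)
    fix \<alpha> assume a: "\<alpha> \<in> ?F"
    have "Poly_Mapping.keys \<alpha> \<subseteq> {0..n-1}"
    proof
      fix i assume i: "i \<in> Poly_Mapping.keys \<alpha>"
      then have "i \<le> n" using a by (auto simp: deg_monos_iff)
      moreover have "i \<noteq> n" using a i by (auto simp: in_keys_iff)
      ultimately show "i \<in> {0..n-1}" by auto
    qed
    then show "\<alpha> \<in> deg_monos (n - 1) m" using a by (simp add: deg_monos_iff)
  next
    fix \<alpha> assume a: "\<alpha> \<in> deg_monos (n - 1) m"
    then have k: "Poly_Mapping.keys \<alpha> \<subseteq> {0..n-1}" "mdeg \<alpha> = m" by (auto simp: deg_monos_iff)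
    then have "n \<notin> Poly_Mapping.keys \<alpha>" using n1 by auto
    then have "Poly_Mapping.lookup \<alpha> n = 0" by (simp add: in_keys_iff)
    moreover have "Poly_Mapping.keys \<alpha> \<subseteq> {0..n}" using k by auto
    ultimately show "\<alpha> \<in> ?F" using k by (simp add: deg_monos_iff)
  qed
  have cF: "card ?F = (n + m - 1) choose m" using card_deg_monos[of "n-1" m] n1 F by simp
  have finF: "finite ?F" by (simp add: finite_deg_monos)
  show ?thesis
  proof
    assume "e \<in> M"
    then have "?F \<subseteq> M" using F_sub by blast
    then have "card ?F \<le> card M" by (rule card_mono[OF finM])
    then show "(n + m - 1) choose m \<le> card M" using cF by simp
  next
    assume c: "(n + m - 1) choose m \<le> card M"
    show "e \<in> M"
    proof (rule ccontr)
      assume ne': "e \<notin> M"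
      have "M \<subseteq> ?F - {e}"
      proof
        fix \<alpha> assume a: "\<alpha> \<in> M"
        then have aD: "\<alpha> \<in> deg_monos n m" using MD by blast
        have "\<alpha> \<noteq> e" using a ne' by blast
        then have "revlex_gt n \<alpha> e \<or> revlex_gt n e \<alpha>" using aD e_D by (intro rl_total) (auto simp: deg_monos_iff)
        moreover have "\<not> revlex_gt n e \<alpha>" using dc a e_D ne' unfolding downclosed_def by blast
        ultimately have gt: "revlex_gt n \<alpha> e" by blast
        then obtain j where j: "j \<le> n" "Poly_Mapping.lookup \<alpha> j < Poly_Mapping.lookup e j"
          "\<forall>i. j < i \<and> i \<le> n \<longrightarrow> Poly_Mapping.lookup \<alpha> i = Poly_Mapping.lookup e i"
          unfolding revlex_gt_def by blast
        then have "j = n - 1" by (auto simp: lookup_single when_def split: if_splits)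
        then have "Poly_Mapping.lookup \<alpha> n = 0" using j(3) n1 by (auto simp: lookup_single when_def)
        then show "\<alpha> \<in> ?F - {e}" using aD \<open>\<alpha> \<noteq> e\<close> by blast
      qed
      then have c1: "card M \<le> card (?F - {e})" using finF by (intro card_mono) auto
      have "e \<in> ?F" using e_D n1 by (auto simp: lookup_single when_def)
      then have c2: "card (?F - {e}) = card ?F - 1" using finF by simp
      have "card ?F \<ge> 1" using cF n1 zero_less_binomial_iff[of "n + m - 1" m] by linarith
      then show False using c cF c1 c2 by linarith
    qed
  qed
qed

end

lemma homog_eq: "homog n t = {p :: 'a::field mpoly. Poly_Mapping.keys p \<subseteq> deg_monos n t}"
  unfolding homog_def by (rule span_xmon)

lemma ringS_eq: "ringS n = {p :: 'a::field mpoly. Poly_Mapping.keys p \<subseteq> {\<alpha>. Poly_Mapping.keys \<alpha> \<subseteq> {0..n}}}"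
  unfolding ringS_def by (rule span_xmon)

lemma xmon_mult: "(xmon a :: 'a::field mpoly) * xmon b = xmon (a + b)"
  by (simp add: xmon_def mult_single)

lemma prod_keys: "prodspace {p :: 'a::field mpoly. Poly_Mapping.keys p \<subseteq> A} {p. Poly_Mapping.keys p \<subseteq> B}
   = {p. Poly_Mapping.keys p \<subseteq> {a + b | a b. a \<in> A \<and> b \<in> B}}"
proof
  show "prodspace {p :: 'a mpoly. Poly_Mapping.keys p \<subseteq> A} {p :: 'a mpoly. Poly_Mapping.keys p \<subseteq> B}
     \<subseteq> {p :: 'a mpoly. Poly_Mapping.keys p \<subseteq> {a + b | a b. a \<in> A \<and> b \<in> B}}"
    unfolding prodspace_def
  proof (rule VS.span_minimal[OF _ subspace_keys])
    show "{f * g |f g. f \<in> {p :: 'a mpoly. Poly_Mapping.keys p \<subseteq> A} \<and> g \<in> {p :: 'a mpoly. Poly_Mapping.keys p \<subseteq> B}}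
      \<subseteq> {p :: 'a mpoly. Poly_Mapping.keys p \<subseteq> {a + b |a b. a \<in> A \<and> b \<in> B}}"
      using keys_mult by fastforce
  qed
next
  have "xmon ` {a + b | a b. a \<in> A \<and> b \<in> B}
     \<subseteq> {f * g |f g. f \<in> {p :: 'a mpoly. Poly_Mapping.keys p \<subseteq> A} \<and> g \<in> {p :: 'a mpoly. Poly_Mapping.keys p \<subseteq> B}}"
  proof
    fix x :: "'a mpoly" assume "x \<in> xmon ` {a + b | a b. a \<in> A \<and> b \<in> B}"
    then obtain a b where ab: "a \<in> A" "b \<in> B" "x = xmon (a + b)" by blast
    have "x = xmon a * xmon b" using ab by (simp add: xmon_mult)
    moreover have "xmon a \<in> {p :: 'a mpoly. Poly_Mapping.keys p \<subseteq> A}" "xmon b \<in> {p :: 'a mpoly. Poly_Mapping.keys p \<subseteq> B}"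
      using ab by (auto simp: xmon_def)
    ultimately show "x \<in> {f * g |f g. f \<in> {p :: 'a mpoly. Poly_Mapping.keys p \<subseteq> A} \<and> g \<in> {p :: 'a mpoly. Poly_Mapping.keys p \<subseteq> B}}"
      by blast
  qed
  then show "{p :: 'a mpoly. Poly_Mapping.keys p \<subseteq> {a + b | a b. a \<in> A \<and> b \<in> B}}
    \<subseteq> prodspace {p :: 'a mpoly. Poly_Mapping.keys p \<subseteq> A} {p :: 'a mpoly. Poly_Mapping.keys p \<subseteq> B}"
    unfolding prodspace_def span_xmon[symmetric] by (rule VS.span_mono)
qed

lemma lookup_hcomp: "Poly_Mapping.lookup (hcomp t f) \<gamma> = (if mdeg \<gamma> = t then Poly_Mapping.lookup f \<gamma> else 0)"
  unfolding hcomp_def by (auto simp: lookup_sum lookup_single when_def in_keys_iff sum.delta)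

lemma lookup_mult_xmon: "Poly_Mapping.lookup ((xmon \<mu> :: 'a::field mpoly) * p) (\<mu> + \<gamma>) = Poly_Mapping.lookup p \<gamma>"
proof -
  have ps: "p = (\<Sum>\<beta>\<in>Poly_Mapping.keys p. Poly_Mapping.single \<beta> (Poly_Mapping.lookup p \<beta>))"
  proof -
    have "smult_mp (Poly_Mapping.lookup p \<beta>) (xmon \<beta>) = Poly_Mapping.single \<beta> (Poly_Mapping.lookup p \<beta>)" for \<beta>
      by (rule poly_mapping_eqI) (simp add: lookup_xmon lookup_single when_def)
    then show ?thesis using xmon_sum[of p] by simp
  qed
  have "(xmon \<mu> :: 'a mpoly) * p = (\<Sum>\<beta>\<in>Poly_Mapping.keys p. Poly_Mapping.single (\<mu> + \<beta>) (Poly_Mapping.lookup p \<beta>))"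
    by (subst ps) (simp add: sum_distrib_left xmon_def mult_single)
  then have "Poly_Mapping.lookup ((xmon \<mu> :: 'a mpoly) * p) (\<mu> + \<gamma>)
     = (\<Sum>\<beta>\<in>Poly_Mapping.keys p. if \<beta> = \<gamma> then Poly_Mapping.lookup p \<beta> else 0)"
    by (simp add: lookup_sum lookup_single when_def)
  also have "\<dots> = Poly_Mapping.lookup p \<gamma>" by (simp add: sum.delta' in_keys_iff)
  finally show ?thesis .
qed

lemma ideal_subspace: "is_ideal n J \<Longrightarrow> VS.subspace (J :: 'a::field mpoly set)"
  unfolding VS.subspace_def is_ideal_def
proof (intro conjI ballI allI)
  fix c :: 'a and x assume h: "J \<subseteq> ringS n \<and> 0 \<in> J \<and> (\<forall>f\<in>J. \<forall>g\<in>J. f + g \<in> J) \<and> (\<forall>s\<in>ringS n. \<forall>f\<in>J. s * f \<in> J)" "x \<in> J"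
  have "Poly_Mapping.single 0 c \<in> (ringS n :: 'a mpoly set)" by (simp add: ringS_eq)
  then show "smult_mp c x \<in> J" using h by (simp add: smult_eq)
qed auto

lemma hilbert_key:
  fixes J :: "'a::field mpoly set" and M :: "(nat \<Rightarrow>\<^sub>0 nat) set"
  assumes MD: "M \<subseteq> deg_monos n m"
    and hom: "homogeneous_ideal n J" and gen: "generated_in_degrees_le n m J"
    and JI: "J \<inter> homog n m = {p. Poly_Mapping.keys p \<subseteq> M}" and tm: "m \<le> t"
  shows "J \<inter> homog n t = {p. Poly_Mapping.keys p \<subseteq> {\<delta> + \<alpha> | \<delta> \<alpha>. \<delta> \<in> deg_monos n (t - m) \<and> \<alpha> \<in> M}}"
proof -
  have idJ: "is_ideal n J" using hom unfolding homogeneous_ideal_def by blast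
  note idJ' = idJ[unfolded is_ideal_def]
  have hc: "\<And>f d. f \<in> J \<Longrightarrow> hcomp d f \<in> J" using hom unfolding homogeneous_ideal_def by blast
  define K where "K = {g \<in> J. \<forall>\<beta>\<in>Poly_Mapping.keys g. m \<le> mdeg \<beta> \<longrightarrow> (\<exists>\<alpha>\<in>M. \<exists>\<rho>. \<beta> = \<alpha> + \<rho>)}"
  have JS: "\<And>f \<beta>. f \<in> J \<Longrightarrow> \<beta> \<in> Poly_Mapping.keys f \<Longrightarrow> Poly_Mapping.keys \<beta> \<subseteq> {0..n}"
    using idJ' by (auto simp: ringS_eq)
  have idK: "is_ideal n K" unfolding is_ideal_def
  proof (intro conjI ballI)
    show "K \<subseteq> ringS n" using idJ' unfolding K_def by blast
    show "0 \<in> K" using idJ' unfolding K_def by simp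
  next
    fix f g assume f: "f \<in> K" and g: "g \<in> K"
    then show "f + g \<in> K" using idJ' keys_add[of f g] unfolding K_def by blast
  next
    fix s :: "'a mpoly" and f assume s: "s \<in> ringS n" and f: "f \<in> K"
    have fJ: "f \<in> J" using f unfolding K_def by blast
    have sfJ: "s * f \<in> J" using idJ' s fJ by blast
    have "\<exists>\<alpha>\<in>M. \<exists>\<rho>. \<beta> = \<alpha> + \<rho>" if b: "\<beta> \<in> Poly_Mapping.keys (s * f)" "m \<le> mdeg \<beta>" for \<beta>
    proof -
      obtain \<mu> \<gamma> where mg: "\<beta> = \<mu> + \<gamma>" "\<mu> \<in> Poly_Mapping.keys s" "\<gamma> \<in> Poly_Mapping.keys f"
        using b keys_mult by blast
      have km: "Poly_Mapping.keys \<mu> \<subseteq> {0..n}" using s mg by (auto simp: ringS_eq)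
      show ?thesis
      proof (cases "m \<le> mdeg \<gamma>")
        case True
        then obtain \<alpha> \<rho> where "\<alpha> \<in> M" "\<gamma> = \<alpha> + \<rho>" using f mg unfolding K_def by blast
        then show ?thesis using mg by (intro bexI[of _ \<alpha>] exI[of _ "\<rho> + \<mu>"]) (auto simp: ac_simps)
      next
        case False
        let ?d = "mdeg \<gamma>"
        have "m - ?d \<le> mdeg \<mu>" using b mg mdeg_add[of \<mu> \<gamma>] by simp
        then obtain \<mu>2 \<rho> where sp: "\<mu> = \<mu>2 + \<rho>" "mdeg \<mu>2 = m - ?d" using split_mono by blast
        have km2: "Poly_Mapping.keys \<mu>2 \<subseteq> {0..n}" using km sp by (auto simp: keys_add_nat)
        let ?h = "hcomp ?d f"
        let ?q = "(xmon \<mu>2 :: 'a mpoly) * ?h"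
        have "xmon \<mu>2 \<in> (ringS n :: 'a mpoly set)" using km2 by (simp add: ringS_eq xmon_def)
        then have qJ: "?q \<in> J" using idJ' hc[OF fJ] by blast
        have "Poly_Mapping.keys ?q \<subseteq> deg_monos n m"
        proof
          fix x assume "x \<in> Poly_Mapping.keys ?q"
          then obtain a c where ac: "x = a + c" "a \<in> Poly_Mapping.keys (xmon \<mu>2 :: 'a mpoly)" "c \<in> Poly_Mapping.keys ?h"
            using keys_mult by blast
          have "a = \<mu>2" using ac by (simp add: xmon_def)
          moreover have "mdeg c = ?d" "c \<in> Poly_Mapping.keys f" using ac(3) by (auto simp: in_keys_iff lookup_hcomp split: if_splits)
          ultimately show "x \<in> deg_monos n m" using ac km2 JS[OF fJ] False sp(2)
            by (auto simp: deg_monos_iff keys_add_sub mdeg_add)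
        qed
        then have "?q \<in> J \<inter> homog n m" using qJ by (simp add: homog_eq)
        then have kq: "Poly_Mapping.keys ?q \<subseteq> M" using JI by blast
        have "Poly_Mapping.lookup ?q (\<mu>2 + \<gamma>) \<noteq> 0"
          using mg(3) by (simp add: lookup_mult_xmon lookup_hcomp in_keys_iff)
        then have "\<mu>2 + \<gamma> \<in> M" using kq by (auto simp: in_keys_iff)
        then show ?thesis using mg sp by (intro bexI[of _ "\<mu>2 + \<gamma>"] exI[of _ \<rho>]) (auto simp: ac_simps)
      qed
    qed
    then show "s * f \<in> K" using sfJ unfolding K_def by blast
  qed
  have GK: "(\<Union>d\<le>m. J \<inter> homog n d) \<subseteq> K"
  proof
    fix g assume "g \<in> (\<Union>d\<le>m. J \<inter> homog n d)"
    then obtain d where d: "d \<le> m" "g \<in> J" "g \<in> homog n d" by blast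
    have "\<exists>\<alpha>\<in>M. \<exists>\<rho>. \<beta> = \<alpha> + \<rho>" if b: "\<beta> \<in> Poly_Mapping.keys g" "m \<le> mdeg \<beta>" for \<beta>
    proof -
      have "mdeg \<beta> = d" using d b by (auto simp: homog_eq deg_monos_iff)
      then have "d = m" using b d by simp
      then have "g \<in> J \<inter> homog n m" using d by simp
      then have "\<beta> \<in> M" using JI b by blast
      then show ?thesis by (intro bexI[of _ \<beta>] exI[of _ 0]) auto
    qed
    then show "g \<in> K" using d unfolding K_def by blast
  qed
  have JK: "J \<subseteq> K"
  proof -
    have "J = ideal_gen n (\<Union>d\<le>m. J \<inter> homog n d)" using gen unfolding generated_in_degrees_le_def by blast
    also have "\<dots> \<subseteq> K" unfolding ideal_gen_def using idK GK by blast
    finally show ?thesis .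
  qed
  let ?P = "{\<delta> + \<alpha> | \<delta> \<alpha>. \<delta> \<in> deg_monos n (t - m) \<and> \<alpha> \<in> M}"
  have PD: "?P \<subseteq> deg_monos n t"
    using MD tm by (auto simp: deg_monos_iff keys_add_sub mdeg_add)
  show ?thesis
  proof (intro set_eqI iffI)
    fix f assume f: "f \<in> J \<inter> homog n t"
    have "\<beta> \<in> ?P" if b: "\<beta> \<in> Poly_Mapping.keys f" for \<beta>
    proof -
      have bD: "\<beta> \<in> deg_monos n t" using f b by (auto simp: homog_eq)
      have "f \<in> K" using JK f by blast
      moreover have "m \<le> mdeg \<beta>" using bD tm by (simp add: deg_monos_iff)
      ultimately obtain \<alpha> \<rho> where ar: "\<alpha> \<in> M" "\<beta> = \<alpha> + \<rho>" using b unfolding K_def by blast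
      have "\<rho> \<in> deg_monos n (t - m)"
        using bD ar MD by (auto simp: deg_monos_iff keys_add_sub mdeg_add)
      moreover have "\<beta> = \<rho> + \<alpha>" using ar by (simp add: add.commute)
      ultimately show ?thesis using ar(1) by blast
    qed
    then show "f \<in> {p. Poly_Mapping.keys p \<subseteq> ?P}" by blast
  next
    fix p :: "'a mpoly" assume p: "p \<in> {p. Poly_Mapping.keys p \<subseteq> ?P}"
    have "p \<in> homog n t" using p PD by (auto simp: homog_eq)
    moreover have "p \<in> J"
    proof -
      have "p \<in> prodspace (homog n (t - m)) (J \<inter> homog n m)"
        using p by (simp add: homog_eq[of n "t - m"] JI prod_keys)
      moreover have "prodspace (homog n (t - m)) (J \<inter> homog n m) \<subseteq> J"
        unfolding prodspace_def
      proof (rule VS.span_minimal[OF _ ideal_subspace[OF idJ]])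
        have "homog n (t - m) \<subseteq> (ringS n :: 'a mpoly set)"
        proof
          fix x :: "'a mpoly" assume "x \<in> homog n (t - m)"
          then have "Poly_Mapping.keys x \<subseteq> deg_monos n (t - m)" by (simp add: homog_eq)
          then show "x \<in> ringS n" unfolding ringS_eq using deg_monos_iff by blast
        qed
        then show "{f * g |f g. f \<in> homog n (t - m) \<and> g \<in> J \<inter> homog n m} \<subseteq> J"
          using idJ' by blast
      qed
      ultimately show ?thesis by blast
    qed
    ultimately show "p \<in> J \<inter> homog n t" by blast
  qed
qed

theorem mainTheorem12:
  fixes n m :: nat and I :: "'a::field_char_0 mpoly set"
  assumes alg_closed: "\<forall>p :: 'a poly. Polynomial.degree p > 0 \<longrightarrow> (\<exists>x. poly p x = 0)"
    and n1: "n \<ge> 1" and m1: "m \<ge> 1"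
    and seg: "\<exists>M. rl_initial_segment n m M \<and> I = kspan (xmon ` M)"
    and nonzero: "I \<noteq> {0}"
  shows "(\<forall>l>0.
            ((\<exists>M'. rl_initial_segment n (m + l) M' \<and>
                   prodspace (homog n l) I = kspan (xmon ` M'))
               \<longleftrightarrow> kdim I \<ge> (n + m - 1) choose m)
          \<and> (kdim I \<ge> (n + m - 1) choose m
               \<longleftrightarrow> xmon (Poly_Mapping.single (n - 1) m) \<in> I))
       \<and> (xmon (Poly_Mapping.single (n - 1) m) \<in> I \<longrightarrow>
            (\<forall>l. int (kdim (homog n m :: 'a mpoly set)) - int (kdim I)
                 = int (kdim (homog n (m + l) :: 'a mpoly set)) - int (kdim (prodspace (homog n l) I)))
          \<and> (\<forall>J :: 'a mpoly set. homogeneous_ideal n J \<and> generated_in_degrees_le n m J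
                 \<and> J \<inter> homog n m = I
               \<longrightarrow> (\<exists>c. \<forall>\<^sub>F t in sequentially. hilbert_fn n J t = c)))"
proof -
  from seg obtain M where segM: "rl_initial_segment n m M" and IM: "I = kspan (xmon ` M)" by blast
  have dcM: "downclosed n m M" using segM seg_iff by blast
  have I_eq: "I = {p. Poly_Mapping.keys p \<subseteq> M}" using IM span_xmon by blast
  have Mne: "M \<noteq> {}"
  proof
    assume "M = {}"
    then have "I = {0}" using I_eq by auto
    then show False using nonzero by blast
  qed
  interpret S: segsetup n m M using n1 dcM Mne by unfold_locales
  let ?e = "Poly_Mapping.single (n - 1) m"
  have dimI: "kdim I = card M" using I_eq dim_keys[OF S.finM] by simp
  have dimD: "kdim (homog n t :: 'a mpoly set) = card (deg_monos n t)" for t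
    using dim_keys[OF finite_deg_monos] by (simp add: homog_eq)
  have prodP: "prodspace (homog n l) I = {p. Poly_Mapping.keys p \<subseteq> S.P l}" for l
    by (simp add: homog_eq I_eq prod_keys S.P_def)
  have dimP: "kdim (prodspace (homog n l) I) = card (S.P l)" for l
    using dim_keys[OF S.finP] prodP by simp
  have memI: "xmon ?e \<in> I \<longleftrightarrow> ?e \<in> M" using I_eq by (simp add: xmon_def)
  have p1: "(\<exists>M'. rl_initial_segment n (m + l) M' \<and> prodspace (homog n l) I = kspan (xmon ` M'))
               \<longleftrightarrow> kdim I \<ge> (n + m - 1) choose m" if l: "l > 0" for l
  proof
    assume "\<exists>M'. rl_initial_segment n (m + l) M' \<and> prodspace (homog n l) I = kspan (xmon ` M')"
    then obtain M' where M': "rl_initial_segment n (m + l) M'" "prodspace (homog n l) I = kspan (xmon ` M')" by blast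
    then have "{p :: 'a mpoly. Poly_Mapping.keys p \<subseteq> S.P l} = {p. Poly_Mapping.keys p \<subseteq> M'}"
      using prodP span_xmon by metis
    then have "S.P l = M'" by (rule keys_eq_sets)
    then have "downclosed n (m + l) (S.P l)" using M'(1) seg_iff by blast
    then have "?e \<in> M" using S.part_ii l by blast
    then show "kdim I \<ge> (n + m - 1) choose m" using S.part_iv dimI by simp
  next
    assume "kdim I \<ge> (n + m - 1) choose m"
    then have "?e \<in> M" using S.part_iv dimI by simp
    then have "rl_initial_segment n (m + l) (S.P l)" using S.part_i seg_iff by blast
    moreover have "prodspace (homog n l) I = kspan (xmon ` S.P l)" using prodP span_xmon by metis
    ultimately show "\<exists>M'. rl_initial_segment n (m + l) M' \<and> prodspace (homog n l) I = kspan (xmon ` M')" by blast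
  qed
  have p2: "kdim I \<ge> (n + m - 1) choose m \<longleftrightarrow> xmon ?e \<in> I"
    using S.part_iv dimI memI by simp
  have p3: "int (kdim (homog n m :: 'a mpoly set)) - int (kdim I)
                 = int (kdim (homog n (m + l) :: 'a mpoly set)) - int (kdim (prodspace (homog n l) I))"
    if "xmon ?e \<in> I" for l
    using S.part_iii[of l] that memI dimI dimD dimP by simp
  have p4: "\<exists>c. \<forall>\<^sub>F t in sequentially. hilbert_fn n J t = c"
    if "xmon ?e \<in> I" "homogeneous_ideal n J" "generated_in_degrees_le n m J" "J \<inter> homog n m = I"
    for J :: "'a mpoly set"
  proof -
    have eM: "?e \<in> M" using that memI by blast
    have "hilbert_fn n J t = int (card (deg_monos n m)) - int (card M)" if t: "t \<ge> m" for t
    proof -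
      have "J \<inter> homog n t = {p. Poly_Mapping.keys p \<subseteq> S.P (t - m)}"
        using hilbert_key[OF S.MD \<open>homogeneous_ideal n J\<close> \<open>generated_in_degrees_le n m J\<close> _ t]
          \<open>J \<inter> homog n m = I\<close> I_eq by (simp add: S.P_def)
      then have "kdim (J \<inter> homog n t) = card (S.P (t - m))" using dim_keys[OF S.finP] by simp
      then have "hilbert_fn n J t = int (card (deg_monos n (m + (t - m)))) - int (card (S.P (t - m)))"
        using dimD t by (simp add: hilbert_fn_def)
      also have "\<dots> = int (card (deg_monos n m)) - int (card M)" using S.part_iii[OF eM, of "t - m"] by simp
      finally show ?thesis .
    qed
    then show ?thesis unfolding eventually_sequentially by blast
  qed
  show ?thesis using p1 p2 p3 p4 by blast
qed

end
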